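(* Let $n\geqslant 2$ and let $\alpha\colon\mathbb{N}^n\to\mathbb{N}^n$ be an isometry of $\mathbb{N}^n$ onto itself such that $(\mathbf{2}_i)\alpha=\mathbf{2}_i$ for all $i=1,\ldots,n$. Then $\alpha$ is the identity map of $\mathbb{N}^n$.
   Context: $\mathbb{N}=\{1,2,3,\ldots\}$ and $\mathbb{N}^n$ carries the Euclidean metric. Maps are written on the right. For $i\in\{1,\ldots,n\}$, $\mathbf{2}_i$ is the point of $\mathbb{N}^n$ whose $i$-th coordinate is $2$ and all other coordinates equal $1$. *)

theory Defs
  imports "HOL-Analysis.Analysis"
begin

text \<open>Points of N^n (N = {1,2,3,...}) are represented as functions nat => nat
  whose coordinates are indexed by 1..n, each coordinate at least 1,
  and which vanish outside {1..n} (so each point has a unique representation).\<close>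

definition Npts :: "nat \<Rightarrow> (nat \<Rightarrow> nat) set" where
  "Npts n = {x. (\<forall>i\<in>{1..n}. 1 \<le> x i) \<and> (\<forall>i. i \<notin> {1..n} \<longrightarrow> x i = 0)}"

definition edist :: "nat \<Rightarrow> (nat \<Rightarrow> nat) \<Rightarrow> (nat \<Rightarrow> nat) \<Rightarrow> real" where
  "edist n x y = sqrt (\<Sum>i\<in>{1..n}. (real (x i) - real (y i))^2)"

definition two_pt :: "nat \<Rightarrow> nat \<Rightarrow> (nat \<Rightarrow> nat)" where
  "two_pt n i = (\<lambda>j. if j \<in> {1..n} then (if j = i then 2 else 1) else 0)"

definition isometry_onto :: "nat \<Rightarrow> ((nat \<Rightarrow> nat) \<Rightarrow> (nat \<Rightarrow> nat)) \<Rightarrow> bool" where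
  "isometry_onto n a \<longleftrightarrow> a ` Npts n = Npts n \<and>
     (\<forall>x\<in>Npts n. \<forall>y\<in>Npts n. edist n (a x) (a y) = edist n x y)"

end

theory Submission
  imports Defs
begin

definition onept :: "nat \<Rightarrow> nat \<Rightarrow> nat" where
  "onept n = (\<lambda>j. if j \<in> {1..n} then 1 else 0)"

lemma onept_in: "onept n \<in> Npts n"
  by (auto simp: onept_def Npts_def)

lemma two_in: "two_pt n i \<in> Npts n"
  by (auto simp: two_pt_def Npts_def)

lemma edist_eq_sq:
  "edist n x y = edist n u v \<Longrightarrow>
   (\<Sum>i\<in>{1..n}. (real (x i) - real (y i))^2) = (\<Sum>i\<in>{1..n}. (real (u i) - real (v i))^2)"
  unfolding edist_def
  by (subst (asm) real_sqrt_eq_iff) simp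

lemma diff_lemma:
  assumes i: "i \<in> {1..n}"
  shows "(\<Sum>j\<in>{1..n}. (real (y j) - real (onept n j))^2)
       - (\<Sum>j\<in>{1..n}. (real (y j) - real (two_pt n i j))^2) = 2 * real (y i) - 3"
proof -
  have "(\<Sum>j\<in>{1..n}. (real (y j) - real (onept n j))^2)
       - (\<Sum>j\<in>{1..n}. (real (y j) - real (two_pt n i j))^2)
       = (\<Sum>j\<in>{1..n}. (real (y j) - real (onept n j))^2 - (real (y j) - real (two_pt n i j))^2)"
    by (simp add: sum_subtractf)
  also have "\<dots> = (real (y i) - 1)^2 - (real (y i) - 2)^2
     + (\<Sum>j\<in>{1..n} - {i}. (real (y j) - real (onept n j))^2 - (real (y j) - real (two_pt n i j))^2)"
    using i by (subst sum.remove[of _ i]) (auto simp: onept_def two_pt_def)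
  also have "(\<Sum>j\<in>{1..n} - {i}. (real (y j) - real (onept n j))^2 - (real (y j) - real (two_pt n i j))^2) = 0"
    by (rule sum.neutral) (auto simp: onept_def two_pt_def)
  finally show ?thesis by (simp add: power2_eq_square algebra_simps)
qed

lemma dist1_lemma:
  assumes z: "z \<in> Npts n" and d: "edist n z (onept n) = 1"
  shows "\<exists>i\<in>{1..n}. z = two_pt n i"
proof -
  have S: "(\<Sum>j\<in>{1..n}. (real (z j) - real (onept n j))^2) = 1"
    using d unfolding edist_def by (metis real_sqrt_eq_1_iff)
  have "\<exists>i\<in>{1..n}. z i \<noteq> 1"
  proof (rule ccontr)
    assume "\<not> ?thesis"
    hence "(\<Sum>j\<in>{1..n}. (real (z j) - real (onept n j))^2) = 0"
      by (intro sum.neutral) (auto simp: onept_def)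
    with S show False by simp
  qed
  then obtain i where i: "i \<in> {1..n}" "z i \<noteq> 1" by blast
  have zi: "z i \<ge> 2" using z i unfolding Npts_def by fastforce
  have t: "(real (z i) - 1)^2 \<ge> 1"
  proof -
    have "real (z i) - 1 \<ge> 1" using zi by simp
    thus ?thesis by (metis le_diff_eq one_le_power one_power2 power_mono zero_le_one)
  qed
  have r: "(\<Sum>j\<in>{1..n} - {i}. (real (z j) - real (onept n j))^2) \<ge> 0"
    by (rule sum_nonneg) simp
  have split: "(\<Sum>j\<in>{1..n}. (real (z j) - real (onept n j))^2)
     = (real (z i) - 1)^2 + (\<Sum>j\<in>{1..n} - {i}. (real (z j) - real (onept n j))^2)"
    using i by (subst sum.remove[of _ i]) (auto simp: onept_def)
  have ti: "(real (z i) - 1)^2 = 1" and r0: "(\<Sum>j\<in>{1..n} - {i}. (real (z j) - real (onept n j))^2) = 0"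
    using S split t r by linarith+
  have "z i = 2"
  proof -
    have "real (z i) - 1 \<ge> 0" using zi by simp
    moreover have "real (z i) - 1 = 1 \<or> real (z i) - 1 = -1"
      using ti power2_eq_1_iff by blast
    ultimately have "real (z i) - 1 = 1" by linarith
    thus ?thesis by simp
  qed
  moreover have "\<forall>j\<in>{1..n} - {i}. (real (z j) - real (onept n j))^2 = 0"
    using r0 by (subst (asm) sum_nonneg_eq_0_iff) auto
  hence "\<forall>j\<in>{1..n} - {i}. z j = 1" by (auto simp: onept_def)
  ultimately have "z = two_pt n i"
    using z i unfolding Npts_def two_pt_def by auto
  thus ?thesis using i by blast
qed

theorem corollary3p1:
  fixes n :: nat and a :: "(nat \<Rightarrow> nat) \<Rightarrow> (nat \<Rightarrow> nat)"
  assumes "n \<ge> 2"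
    and "isometry_onto n a"
    and "\<forall>i\<in>{1..n}. a (two_pt n i) = two_pt n i"
  shows "\<forall>x\<in>Npts n. a x = x"
proof -
  have onto: "a ` Npts n = Npts n" and iso: "\<And>x y. x \<in> Npts n \<Longrightarrow> y \<in> Npts n \<Longrightarrow> edist n (a x) (a y) = edist n x y"
    using assms(2) unfolding isometry_onto_def by auto
  define p where "p = a (onept n)"
  have p: "p \<in> Npts n" using onto onept_in p_def by blast
  define q where "q = p(1 := Suc (p 1))"
  have n1: "1 \<in> {1..n}" using assms(1) by simp
  have q: "q \<in> Npts n" using p n1 unfolding q_def Npts_def by auto
  have "(\<Sum>j\<in>{1..n}. (real (q j) - real (p j))^2) = 1"
  proof -
    have "(\<Sum>j\<in>{1..n}. (real (q j) - real (p j))^2) = (real (q 1) - real (p 1))^2 + (\<Sum>j\<in>{1..n}-{1}. (real (q j) - real (p j))^2)"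
      using n1 by (subst sum.remove[of _ 1]) auto
    also have "(\<Sum>j\<in>{1..n}-{1}. (real (q j) - real (p j))^2) = 0"
      by (rule sum.neutral) (auto simp: q_def)
    finally show ?thesis by (simp add: q_def)
  qed
  hence dqp: "edist n q p = 1" unfolding edist_def by simp
  obtain z where z: "z \<in> Npts n" "q = a z" using q onto by blast
  have "edist n z (onept n) = 1" using iso[OF z(1) onept_in] dqp z(2) p_def by simp
  then obtain i where i: "i \<in> {1..n}" "z = two_pt n i" using dist1_lemma z(1) by blast
  have qi: "q = two_pt n i" using z(2) i assms(3) by simp
  have "i = 1"
  proof (rule ccontr)
    assume "i \<noteq> 1"
    hence "q 1 = 1" using qi n1 by (simp add: two_pt_def)
    hence "p 1 = 0" by (simp add: q_def)
    moreover have "1 \<le> p 1" using p n1 unfolding Npts_def by blast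
    ultimately show False by simp
  qed
  have pone: "p = onept n"
  proof
    fix j show "p j = onept n j"
    proof (cases "j = 1")
      case True
      have "q 1 = 2" using qi \<open>i = 1\<close> n1 by (simp add: two_pt_def)
      hence "p 1 = 1" by (simp add: q_def)
      thus ?thesis using True n1 by (simp add: onept_def)
    next
      case False
      hence "p j = q j" by (simp add: q_def)
      thus ?thesis using qi \<open>i = 1\<close> False by (simp add: two_pt_def onept_def)
    qed
  qed
  show ?thesis
  proof
    fix x assume x: "x \<in> Npts n"
    have y: "a x \<in> Npts n" using onto x by blast
    have e1: "(\<Sum>j\<in>{1..n}. (real (a x j) - real (onept n j))^2) = (\<Sum>j\<in>{1..n}. (real (x j) - real (onept n j))^2)"
      using iso[OF x onept_in] pone p_def by (intro edist_eq_sq) simp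
    show "a x = x"
    proof
      fix j show "a x j = x j"
      proof (cases "j \<in> {1..n}")
        case True
        have e2: "(\<Sum>k\<in>{1..n}. (real (a x k) - real (two_pt n j k))^2) = (\<Sum>k\<in>{1..n}. (real (x k) - real (two_pt n j k))^2)"
          using iso[OF x two_in[of n j]] assms(3) True by (intro edist_eq_sq) simp
        have "2 * real (a x j) - 3 = 2 * real (x j) - 3"
          using diff_lemma[OF True, of "a x"] diff_lemma[OF True, of x] e1 e2 by simp
        thus ?thesis by simp
      next
        case False thus ?thesis using x y unfolding Npts_def by auto
      qed
    qed
  qed
qed

end
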